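(* Let $r\in\mathbb{N}$ and let $H=\begin{bmatrix}A&B\\C&D\end{bmatrix}$ with $A,B,C,D\in\mathbb{R}^{r\times r}$, where $A$ and $D$ are upper-triangular with diagonal entries $a_1,\dots,a_r$ and $d_1,\dots,d_r$ respectively, and $B$ and $C$ are diagonal with diagonal entries $b_1,\dots,b_r$ and $c_1,\dots,c_r$ respectively. If for every $i\in\{1,\dots,r\}$ the $2\times2$ matrix $\begin{bmatrix}a_i&b_i\\c_i&d_i\end{bmatrix}$ is stable, then $H$ is stable.
   Context: A square matrix is stable if all its eigenvalues have modulus strictly less than $1$. *)

theory Defs
  imports "Jordan_Normal_Form.Matrix" "Jordan_Normal_Form.Char_Poly" "HOL-Analysis.Analysis"
begin

definition stable :: "real mat \<Rightarrow> bool" where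
  "stable M \<longleftrightarrow> square_mat M \<and>
     (\<forall>k::complex. eigenvalue (map_mat complex_of_real M) k \<longrightarrow> cmod k < 1)"

end

theory Submission
  imports Defs
begin

lemma sum_single_nz:
  fixes f :: "nat \<Rightarrow> complex"
  assumes "i < r" "\<And>j. j < r \<Longrightarrow> j \<noteq> i \<Longrightarrow> f j = 0"
  shows "(\<Sum>j<r. f j) = f i"
proof -
  have "(\<Sum>j<r. f j) = f i + (\<Sum>j\<in>{..<r}-{i}. f j)"
    using assms(1) by (simp add: sum.remove)
  also have "(\<Sum>j\<in>{..<r}-{i}. f j) = 0" using assms(2) by (intro sum.neutral) auto
  finally show ?thesis by simp
qed

lemma mult_split:
  fixes M :: "complex mat" and v :: "complex Matrix.vec"
  assumes "M \<in> carrier_mat (r+r) (r+r)" "v \<in> carrier_vec (r+r)" "k < r + r"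
  shows "(M *\<^sub>v v) $ k = (\<Sum>j<r. M $$ (k,j) * v $ j) + (\<Sum>j<r. M $$ (k,r+j) * v $ (r+j))"
proof -
  have "(M *\<^sub>v v) $ k = (\<Sum>j\<in>{0..<r+r}. M $$ (k,j) * v $ j)"
    using assms by (simp add: scalar_prod_def)
  also have "\<dots> = (\<Sum>j\<in>{0..<r}. M $$ (k,j) * v $ j) + (\<Sum>j\<in>{r..<r+r}. M $$ (k,j) * v $ j)"
    by (simp add: sum.atLeastLessThan_concat)
  also have "(\<Sum>j\<in>{r..<r+r}. M $$ (k,j) * v $ j) = (\<Sum>j\<in>{0..<r}. M $$ (k,r+j) * v $ (r+j))"
    using sum.shift_bounds_nat_ivl[of "\<lambda>j. M $$ (k,j) * v $ j" 0 r r]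
    by (simp add: add.commute)
  finally show ?thesis by (simp add: atLeast0LessThan)
qed

theorem lemma5:
  fixes r :: nat and A B C D :: "real mat"
  assumes "A \<in> carrier_mat r r" "B \<in> carrier_mat r r"
    and "C \<in> carrier_mat r r" "D \<in> carrier_mat r r"
    and "upper_triangular A" "upper_triangular D"
    and "diagonal_mat B" "diagonal_mat C"
    and "\<forall>i<r. stable (mat_of_rows_list 2 [[A $$ (i,i), B $$ (i,i)], [C $$ (i,i), D $$ (i,i)]])"
  shows "stable (four_block_mat A B C D)"
proof -
  note cA = assms(1) and cB = assms(2) and cC = assms(3) and cD = assms(4)
  define H where "H = four_block_mat A B C D"
  define Hc where "Hc = map_mat complex_of_real H"
  have HC: "H \<in> carrier_mat (r+r) (r+r)" unfolding H_def using cA cD by simp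
  have HcC: "Hc \<in> carrier_mat (r+r) (r+r)" unfolding Hc_def using HC by simp
  have Hent: "Hc $$ (k,j) = complex_of_real (if k < r then if j < r then A $$ (k,j) else B $$ (k,j-r)
      else if j < r then C $$ (k-r,j) else D $$ (k-r,j-r))" if "k < r+r" "j < r+r" for k j
    using that cA cB cC cD HC unfolding Hc_def H_def by auto
  have "cmod k < 1" if ev: "eigenvalue Hc k" for k
  proof -
    from ev obtain v where v: "v \<in> carrier_vec (r+r)" "v \<noteq> 0\<^sub>v (r+r)" "Hc *\<^sub>v v = k \<cdot>\<^sub>v v"
      unfolding eigenvalue_def eigenvector_def using HcC by auto
    define S where "S = {i. i < r \<and> (v $ i \<noteq> 0 \<or> v $ (r+i) \<noteq> 0)}"
    have finS: "finite S" unfolding S_def by auto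
    obtain j0 where j0: "j0 < r+r" "v $ j0 \<noteq> 0"
      using v(1,2) by (metis carrier_vecD eq_vecI index_zero_vec(1,2))
    have neS: "S \<noteq> {}"
    proof (cases "j0 < r")
      case True then show ?thesis using j0 unfolding S_def by auto
    next
      case False then have "j0 - r \<in> S" using j0 unfolding S_def by auto
      then show ?thesis by auto
    qed
    define i where "i = Max S"
    have iS: "i \<in> S" unfolding i_def using finS neS by simp
    have ir: "i < r" using iS unfolding S_def by auto
    have zero: "v $ j = 0" "v $ (r+j) = 0" if "i < j" "j < r" for j
    proof -
      have "j \<notin> S" using that finS i_def Max_ge leD by blast
      then show "v $ j = 0" "v $ (r+j) = 0" using that unfolding S_def by auto
    qed
    define a where "a = A $$ (i,i)" define b where "b = B $$ (i,i)"
    define c where "c = C $$ (i,i)" define d where "d = D $$ (i,i)"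
    have e1: "complex_of_real a * v $ i + complex_of_real b * v $ (r+i) = k * v $ i"
    proof -
      have "(Hc *\<^sub>v v) $ i = (\<Sum>j<r. Hc $$ (i,j) * v $ j) + (\<Sum>j<r. Hc $$ (i,r+j) * v $ (r+j))"
        using mult_split[OF HcC v(1)] ir by simp
      also have "(\<Sum>j<r. Hc $$ (i,j) * v $ j) = Hc $$ (i,i) * v $ i"
      proof (rule sum_single_nz[OF ir])
        fix j assume j: "j < r" "j \<noteq> i"
        show "Hc $$ (i,j) * v $ j = 0"
        proof (cases "j < i")
          case True then have "A $$ (i,j) = 0" using assms(5) cA ir by auto
          then show ?thesis using Hent[of i j] j ir by simp
        next
          case False then show ?thesis using zero[of j] j by simp
        qed
      qed
      also have "(\<Sum>j<r. Hc $$ (i,r+j) * v $ (r+j)) = Hc $$ (i,r+i) * v $ (r+i)"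
      proof (rule sum_single_nz[OF ir])
        fix j assume j: "j < r" "j \<noteq> i"
        have "B $$ (i,j) = 0" using assms(7) cB ir j unfolding diagonal_mat_def by auto
        then show "Hc $$ (i,r+j) * v $ (r+j) = 0" using Hent[of i "r+j"] j ir by simp
      qed
      finally show ?thesis using v(3) v(1) ir Hent[of i i] Hent[of i "r+i"]
        unfolding a_def b_def by simp
    qed
    have e2: "complex_of_real c * v $ i + complex_of_real d * v $ (r+i) = k * v $ (r+i)"
    proof -
      have "(Hc *\<^sub>v v) $ (r+i) = (\<Sum>j<r. Hc $$ (r+i,j) * v $ j) + (\<Sum>j<r. Hc $$ (r+i,r+j) * v $ (r+j))"
        using mult_split[OF HcC v(1)] ir by simp
      also have "(\<Sum>j<r. Hc $$ (r+i,j) * v $ j) = Hc $$ (r+i,i) * v $ i"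
      proof (rule sum_single_nz[OF ir])
        fix j assume j: "j < r" "j \<noteq> i"
        have "C $$ (i,j) = 0" using assms(8) cC ir j unfolding diagonal_mat_def by auto
        then show "Hc $$ (r+i,j) * v $ j = 0" using Hent[of "r+i" j] j ir by simp
      qed
      also have "(\<Sum>j<r. Hc $$ (r+i,r+j) * v $ (r+j)) = Hc $$ (r+i,r+i) * v $ (r+i)"
      proof (rule sum_single_nz[OF ir])
        fix j assume j: "j < r" "j \<noteq> i"
        show "Hc $$ (r+i,r+j) * v $ (r+j) = 0"
        proof (cases "j < i")
          case True then have "D $$ (i,j) = 0" using assms(6) cD ir by auto
          then show ?thesis using Hent[of "r+i" "r+j"] j ir by simp
        next
          case False then show ?thesis using zero[of j] j by simp
        qed
      qed
      finally show ?thesis using v(3) v(1) ir Hent[of "r+i" i] Hent[of "r+i" "r+i"]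
        unfolding c_def d_def by simp
    qed
    define M where "M = mat_of_rows_list 2 [[a, b], [c, d]]"
    have st: "stable M" using assms(9) ir unfolding M_def a_def b_def c_def d_def by blast
    define w where "w = Matrix.vec 2 (\<lambda>j. if j = 0 then v $ i else v $ (r+i))"
    have Mc: "map_mat complex_of_real M \<in> carrier_mat 2 2" unfolding M_def mat_of_rows_list_def by (simp add: numeral_2_eq_2)
    have wC: "w \<in> carrier_vec 2" unfolding w_def by simp
    have wnz: "w \<noteq> 0\<^sub>v 2"
    proof
      assume "w = 0\<^sub>v 2"
      then have "w $ 0 = 0" "w $ 1 = 0" by auto
      then show False using iS unfolding w_def S_def by auto
    qed
    have less2: "j < 2 \<Longrightarrow> j = 0 \<or> j = 1" for j :: nat by auto
    have Mw: "map_mat complex_of_real M *\<^sub>v w = k \<cdot>\<^sub>v w"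
    proof (rule eq_vecI)
      show "dim_vec (map_mat complex_of_real M *\<^sub>v w) = dim_vec (k \<cdot>\<^sub>v w)"
        using Mc wC by simp
      fix j assume "j < dim_vec (k \<cdot>\<^sub>v w)"
      then have "j = 0 \<or> j = 1" using wC less2 by auto
      then show "(map_mat complex_of_real M *\<^sub>v w) $ j = (k \<cdot>\<^sub>v w) $ j"
        using e1 e2 unfolding M_def w_def mat_of_rows_list_def
        by (auto simp: scalar_prod_def numeral_2_eq_2 mult.commute)
    qed
    have "eigenvalue (map_mat complex_of_real M) k"
      unfolding eigenvalue_def eigenvector_def using Mc wC wnz Mw by auto
    then show ?thesis using st unfolding stable_def by blast
  qed
  then show ?thesis unfolding stable_def H_def[symmetric] Hc_def[symmetric] using HC by auto
qed

end
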